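(* For every integer $n\geq 1$, $$A_{2n}(p,q)=(1+p)A_{2n-1}(p,q)+(p+q)\sum_{i=1}^{n-1}\binom{2n-1}{2i-1}A_{2i-1}(p,q)A_{2n-2i}(p,q),$$ $$A_{2n+1}(p,q)=A_{2n}(p,q)+p\sum_{i=0}^{n-1}\binom{2n}{2i}A_{2i}(p,q)A_{2n-2i}(q,p)+q\sum_{i=1}^{n}\binom{2n}{2i-1}A_{2i-1}(p,q)A_{2n-2i+1}(p,q).$$
   Context: For a permutation $\pi=a_1a_2\cdots a_n$ of $[n]=\{1,\dots,n\}$, an index $i\in[n-1]$ is a descent if $a_i>a_{i+1}$. Let $\mathrm{odes}(\pi)$ (resp. $\mathrm{edes}(\pi)$) be the number of descents $i$ of $\pi$ with $i$ odd (resp. even). For $n\ge1$ the refined Eulerian polynomial is $A_n(p,q)=\sum_{\pi\in\mathfrak S_n}p^{\mathrm{odes}(\pi)}q^{\mathrm{edes}(\pi)}$, and $A_0(p,q)=1$. *)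

theory Defs
  imports "HOL-Combinatorics.Multiset_Permutations"
begin

(* A permutation a_1 ... a_n of [n] is the list [a_1,...,a_n]; index i (1-based) is a descent
   iff a_i > a_{i+1}, i.e. xs!(i-1) > xs!i for 1 <= i < n. *)
definition descents :: "nat list \<Rightarrow> nat set" where
  "descents xs = {i \<in> {1..<length xs}. xs ! (i - 1) > xs ! i}"

definition odes :: "nat list \<Rightarrow> nat" where
  "odes xs = card {i \<in> descents xs. odd i}"

definition edes :: "nat list \<Rightarrow> nat" where
  "edes xs = card {i \<in> descents xs. even i}"

(* Refined Eulerian polynomial, evaluated in an arbitrary commutative ring; A 0 = 1 automatically
   since permutations_of_set {} = {[]}. *)
definition A :: "nat \<Rightarrow> 'a::comm_ring_1 \<Rightarrow> 'a \<Rightarrow> 'a" where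
  "A n p q = (\<Sum>xs\<in>permutations_of_set {1..n}. p ^ odes xs * q ^ edes xs)"

end

theory Submission
  imports Defs
begin

definition w :: "'a::comm_ring_1 \<Rightarrow> 'a \<Rightarrow> nat \<Rightarrow> 'a" where
  "w p q i = (if odd i then p else q)"

definition wt :: "'a::comm_ring_1 \<Rightarrow> 'a \<Rightarrow> nat list \<Rightarrow> 'a" where
  "wt p q xs = (\<Prod>i\<in>descents xs. w p q i)"

lemma descents_sub: "descents xs \<subseteq> {1..<length xs}"
  unfolding descents_def by auto

lemma finite_descents[simp]: "finite (descents xs)"
  by (rule finite_subset[OF descents_sub]) simp

lemma wt_eq: "p ^ odes xs * q ^ edes xs = wt p q xs"
proof -
  have "wt p q xs = (\<Prod>i\<in>descents xs \<inter> {i. odd i}. p) * (\<Prod>i\<in>descents xs \<inter> - {i. odd i}. q)"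
    unfolding wt_def w_def by (rule prod.If_cases) simp
  also have "descents xs \<inter> {i. odd i} = {i \<in> descents xs. odd i}" by auto
  also have "descents xs \<inter> - {i. odd i} = {i \<in> descents xs. even i}" by auto
  finally show ?thesis by (simp add: odes_def edes_def)
qed

lemma w_shift: "w p q (i + k) = (if even k then w p q i else w q p i)"
  unfolding w_def by auto

lemma descents_append:
  assumes "xs \<noteq> [] \<Longrightarrow> last xs < m"
  shows "descents (xs @ m # ys) = descents xs \<union> (\<lambda>i. i + length xs) ` descents (m # ys)"
proof (rule set_eqI)
  fix i
  let ?L = "length xs"
  show "i \<in> descents (xs @ m # ys) \<longleftrightarrow> i \<in> descents xs \<union> (\<lambda>i. i + ?L) ` descents (m # ys)"
  proof (cases "i < ?L")
    case True
    then show ?thesis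
      by (auto simp: descents_def nth_append)
  next
    case False
    show ?thesis
    proof (cases "i = ?L")
      case True
      have "\<not> i \<in> descents (xs @ m # ys)"
      proof
        assume a: "i \<in> descents (xs @ m # ys)"
        then have "i \<ge> 1" unfolding descents_def by auto
        then have ne: "xs \<noteq> []" using True by auto
        have "(xs @ m # ys) ! (i - 1) = last xs" using True ne
          by (simp add: nth_append last_conv_nth)
        moreover have "(xs @ m # ys) ! i = m" using True by (simp add: nth_append)
        ultimately show False using a assms[OF ne] unfolding descents_def by auto
      qed
      moreover have "i \<notin> descents xs" using True descents_sub by fastforce
      moreover have "i \<notin> (\<lambda>i. i + ?L) ` descents (m # ys)"
        using True descents_sub[of "m#ys"] by fastforce
      ultimately show ?thesis by blast
    next
      case False2: False
      define j where "j = i - ?L"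
      have j: "i = j + ?L" "j \<ge> 1" using False False2 by (auto simp: j_def)
      have "i \<notin> descents xs" using j descents_sub by fastforce
      moreover have "i \<in> (\<lambda>i. i + ?L) ` descents (m # ys) \<longleftrightarrow> j \<in> descents (m # ys)"
        using j by auto
      moreover have "i \<in> descents (xs @ m # ys) \<longleftrightarrow> j \<in> descents (m # ys)"
      proof -
        obtain k where k: "j = Suc k" using j(2) by (cases j) auto
        have "(xs @ m # ys) ! (i - 1) = (m # ys) ! (j - 1)"
          using j k nth_append_length_plus[of xs "m # ys" k] by (simp add: add.commute)
        moreover have "(xs @ m # ys) ! i = (m # ys) ! j"
          using j nth_append_length_plus[of xs "m # ys" j] by (simp add: add.commute)
        ultimately show ?thesis using j unfolding descents_def by auto
      qed
      ultimately show ?thesis by blast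
    qed
  qed
qed

lemma descents_Cons_max:
  assumes "\<forall>y\<in>set ys. y < m"
  shows "descents (m # ys) = (if ys = [] then {} else {1}) \<union> Suc ` descents ys"
proof (rule set_eqI)
  fix i
  show "i \<in> descents (m # ys) \<longleftrightarrow> i \<in> (if ys = [] then {} else {1}) \<union> Suc ` descents ys"
  proof (cases "i \<le> 1")
    case True
    have "i \<notin> Suc ` descents ys" using True descents_sub by fastforce
    moreover have "i \<in> descents (m # ys) \<longleftrightarrow> i \<in> (if ys = [] then {} else {1})"
      using True assms by (cases ys) (auto simp: descents_def)
    ultimately show ?thesis by blast
  next
    case False
    then obtain j where j: "i = Suc j" "j \<ge> 1" by (cases i) auto
    have "i \<in> Suc ` descents ys \<longleftrightarrow> j \<in> descents ys" using j by auto
    moreover have "i \<in> descents (m # ys) \<longleftrightarrow> j \<in> descents ys"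
      using j by (cases j) (auto simp: descents_def)
    ultimately show ?thesis using j by auto
  qed
qed

lemma wt_split:
  assumes "\<forall>x\<in>set xs. x < m" "\<forall>y\<in>set ys. y < m"
  shows "wt p q (xs @ m # ys) = wt p q xs * (if ys = [] then 1 else w p q (Suc (length xs)))
           * (if even (Suc (length xs)) then wt p q ys else wt q p ys)"
proof -
  let ?L = "length xs"
  have l: "xs \<noteq> [] \<Longrightarrow> last xs < m" using assms(1) by auto
  have d: "descents (xs @ m # ys) = descents xs \<union> (\<lambda>i. i + ?L) ` ((if ys = [] then {} else {1}) \<union> Suc ` descents ys)"
    using descents_append[OF l] descents_Cons_max[OF assms(2)] by simp
  have disj1: "descents xs \<inter> (\<lambda>i. i + ?L) ` ((if ys = [] then {} else {1}) \<union> Suc ` descents ys) = {}"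
    using descents_sub[of xs] by auto
  have disj2: "(if ys = [] then {} else {1}) \<inter> Suc ` descents ys = {}"
    using descents_sub[of ys] by auto
  have inj: "inj_on (\<lambda>i. i + ?L) X" for X by (auto simp: inj_on_def)
  have "wt p q (xs @ m # ys) = wt p q xs * (\<Prod>i\<in>(if ys = [] then {} else {1}) \<union> Suc ` descents ys. w p q (i + ?L))"
    unfolding wt_def d
    by (subst prod.union_disjoint) (use disj1 in \<open>auto simp: prod.reindex[OF inj]\<close>)
  also have "(\<Prod>i\<in>(if ys = [] then {} else {1}) \<union> Suc ` descents ys. w p q (i + ?L))
      = (if ys = [] then 1 else w p q (Suc ?L)) * (\<Prod>i\<in>descents ys. w p q (Suc i + ?L))"
    by (subst prod.union_disjoint) (use disj2 in \<open>auto simp: prod.reindex\<close>)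
  also have "(\<Prod>i\<in>descents ys. w p q (Suc i + ?L)) = (if even (Suc ?L) then wt p q ys else wt q p ys)"
    unfolding wt_def by (auto simp: w_shift[of p q _ "Suc ?L", simplified add_Suc_right add_Suc])
  finally show ?thesis by (simp add: mult.assoc)
qed


definition W :: "nat set \<Rightarrow> 'a::comm_ring_1 \<Rightarrow> 'a \<Rightarrow> 'a" where
  "W S p q = (\<Sum>xs\<in>permutations_of_set S. wt p q xs)"

lemma A_W: "A n p q = W {1..n} p q"
  by (simp add: A_def W_def wt_eq)


lemma perms_decomp:
  fixes g :: "nat list \<Rightarrow> 'a::comm_ring_1"
  assumes fin: "finite S" and m: "m \<in> S"
  shows "sum g (permutations_of_set S) =
    (\<Sum>T\<in>Pow (S - {m}). \<Sum>(xs,ys)\<in>permutations_of_set T \<times> permutations_of_set (S - {m} - T). g (xs @ m # ys))"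
proof -
  let ?X = "S - {m}"
  let ?Sig = "Sigma (Pow ?X) (\<lambda>T. permutations_of_set T \<times> permutations_of_set (?X - T))"
  let ?h = "\<lambda>(T::nat set, xs, ys). xs @ m # ys"
  have finX: "finite ?X" using fin by simp
  have memSig: "(T, xs, ys) \<in> ?Sig \<longleftrightarrow> T \<subseteq> ?X \<and> set xs = T \<and> distinct xs \<and> set ys = ?X - T \<and> distinct ys"
    for T xs ys by (simp add: permutations_of_set_def)
  have bij: "bij_betw ?h ?Sig (permutations_of_set S)"
    unfolding bij_betw_def
  proof
    show "inj_on ?h ?Sig"
    proof (rule inj_onI)
      fix a b assume ab: "a \<in> ?Sig" "b \<in> ?Sig" "?h a = ?h b"
      obtain T xs ys where ta: "a = (T, xs, ys)" by (cases a) auto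
      obtain T' xs' ys' where tb: "b = (T', xs', ys')" by (cases b) auto
      have a1: "T \<subseteq> ?X \<and> set xs = T \<and> distinct xs \<and> set ys = ?X - T \<and> distinct ys"
        using ab(1) ta memSig by simp
      have a2: "T' \<subseteq> ?X \<and> set xs' = T' \<and> distinct xs' \<and> set ys' = ?X - T' \<and> distinct ys'"
        using ab(2) tb memSig by simp
      have a3: "xs @ m # ys = xs' @ m # ys'" using ab(3) ta tb by simp
      have "m \<notin> set xs" "m \<notin> set ys" using a1 by auto
      then have "xs = xs' \<and> ys = ys'" using a3 append_Cons_eq_iff by metis
      then show "a = b" using ta tb a1 a2 by simp
    qed
  next
    show "?h ` ?Sig = permutations_of_set S"
    proof
      show "?h ` ?Sig \<subseteq> permutations_of_set S"
      proof
        fix z assume "z \<in> ?h ` ?Sig"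
        then obtain a where a: "a \<in> ?Sig" "z = ?h a" by blast
        obtain T xs ys where ta: "a = (T, xs, ys)" by (cases a) auto
        have a1: "T \<subseteq> ?X \<and> set xs = T \<and> distinct xs \<and> set ys = ?X - T \<and> distinct ys"
          using a(1) ta memSig by simp
        have z: "z = xs @ m # ys" using a(2) ta by simp
        have "set z = S" using a1 m z by auto
        moreover have "distinct z" using a1 z by auto
        ultimately show "z \<in> permutations_of_set S" by (simp add: permutations_of_set_def)
      qed
    next
      show "permutations_of_set S \<subseteq> ?h ` ?Sig"
      proof
        fix zs assume z: "zs \<in> permutations_of_set S"
        then have sz: "set zs = S" "distinct zs" by (auto simp: permutations_of_set_def)
        then have "m \<in> set zs" using m by simp
        then obtain xs ys where zs: "zs = xs @ m # ys" by (meson split_list)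
        have "set xs \<subseteq> ?X \<and> set xs = set xs \<and> distinct xs \<and> set ys = ?X - set xs \<and> distinct ys"
          using sz zs by auto
        then have "(set xs, xs, ys) \<in> ?Sig" using memSig by blast
        moreover have "zs = ?h (set xs, xs, ys)" using zs by simp
        ultimately show "zs \<in> ?h ` ?Sig" by blast
      qed
    qed
  qed
  have "(\<Sum>T\<in>Pow ?X. \<Sum>(xs,ys)\<in>permutations_of_set T \<times> permutations_of_set (?X - T). g (xs @ m # ys))
      = (\<Sum>(T,xs,ys)\<in>?Sig. g (xs @ m # ys))"
    by (rule sum.Sigma) (simp_all add: fin)
  also have "\<dots> = (\<Sum>a\<in>?Sig. g (?h a))"
    by (rule sum.cong) auto
  also have "\<dots> = sum g (permutations_of_set S)"
    by (rule sum.reindex_bij_betw[OF bij])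
  finally show ?thesis by simp
qed

lemma sum_prod_split:
  fixes f h :: "_ \<Rightarrow> 'a::comm_ring_1"
  shows "(\<Sum>(x,y)\<in>X\<times>Y. f x * c * h y) = sum f X * c * sum h Y"
proof -
  have "sum f X * c * sum h Y = (\<Sum>x\<in>X. f x * c) * sum h Y" by (simp only: sum_distrib_right)
  also have "\<dots> = (\<Sum>x\<in>X. \<Sum>y\<in>Y. f x * c * h y)" by (simp add: sum_product)
  finally show ?thesis by (simp add: sum.cartesian_product)
qed

lemma W_decomp:
  fixes p q :: "'a::comm_ring_1"
  assumes fin: "finite S" and ne: "S \<noteq> {}"
  defines "m \<equiv> Max S"
  shows "W S p q = (\<Sum>T\<in>Pow (S - {m}). W T p q *
      (if card T = card S - 1 then 1 else w p q (Suc (card T))) *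
      (if even (Suc (card T)) then W (S - {m} - T) p q else W (S - {m} - T) q p))"
proof -
  have mS: "m \<in> S" unfolding m_def using fin ne by simp
  have mx: "x \<in> S \<Longrightarrow> x \<le> m" for x unfolding m_def using fin by simp
  have cS: "card (S - {m}) = card S - 1" using fin mS by simp
  let ?X = "S - {m}"
  have "W S p q = (\<Sum>T\<in>Pow ?X. \<Sum>(xs,ys)\<in>permutations_of_set T \<times> permutations_of_set (?X - T). wt p q (xs @ m # ys))"
    unfolding W_def by (rule perms_decomp[OF fin mS])
  also have "\<dots> = (\<Sum>T\<in>Pow (S - {m}). W T p q *
      (if card T = card S - 1 then 1 else w p q (Suc (card T))) *
      (if even (Suc (card T)) then W (S - {m} - T) p q else W (S - {m} - T) q p))"
  proof (rule sum.cong[OF refl])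
    fix T assume T: "T \<in> Pow (S - {m})"
    let ?c = "(if card T = card S - 1 then 1 else w p q (Suc (card T)))"
    let ?b = "even (Suc (card T))"
    let ?R = "S - {m} - T"
    have finT: "finite T" using T fin by (auto intro: finite_subset)
    have e: "(S - {m} - T = {}) \<longleftrightarrow> card T = card S - 1"
    proof -
      have "card (S - {m} - T) = card S - 1 - card T"
        using T fin cS by (simp add: card_Diff_subset finT)
      moreover have "card T \<le> card S - 1" using T fin cS by (metis PowD card_mono finite_Diff)
      moreover have "S - {m} - T = {} \<longleftrightarrow> card (S - {m} - T) = 0" using fin by simp
      ultimately show ?thesis by linarith
    qed
    have "(\<Sum>(xs, ys)\<in>permutations_of_set T \<times> permutations_of_set ?R. wt p q (xs @ m # ys))
      = (\<Sum>(xs, ys)\<in>permutations_of_set T \<times> permutations_of_set ?R.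
           wt p q xs * ?c * (if ?b then wt p q ys else wt q p ys))"
    proof (rule sum.cong[OF refl], clarify)
      fix xs ys assume a: "xs \<in> permutations_of_set T" "ys \<in> permutations_of_set ?R"
      have lx: "length xs = card T" using a(1) by (auto simp: permutations_of_set_def distinct_card)
      have sy: "set ys = S - {m} - T" using a(2) by (simp add: permutations_of_set_def)
      have ye: "ys = [] \<longleftrightarrow> card T = card S - 1" unfolding e[symmetric] sy[symmetric] by simp
      have "\<forall>x\<in>set xs. x < m" "\<forall>y\<in>set ys. y < m"
      proof -
        have lt: "\<And>x. x \<in> S - {m} \<Longrightarrow> x < m" using mx le_neq_implies_less by blast
        show "\<forall>x\<in>set xs. x < m" "\<forall>y\<in>set ys. y < m"
          using a T lt by (auto simp: permutations_of_set_def)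
      qed
      then have ws: "wt p q (xs @ m # ys) = wt p q xs * (if ys = [] then 1 else w p q (Suc (length xs)))
           * (if even (Suc (length xs)) then wt p q ys else wt q p ys)" by (rule wt_split)
      show "wt p q (xs @ m # ys) = wt p q xs * ?c * (if ?b then wt p q ys else wt q p ys)"
        using ws by (simp only: ye lx)
    qed
    also have "\<dots> = (\<Sum>xs\<in>permutations_of_set T. wt p q xs) * ?c *
       (\<Sum>ys\<in>permutations_of_set ?R. (if ?b then wt p q ys else wt q p ys))"
      by (rule sum_prod_split[where f="wt p q" and h="\<lambda>ys. if ?b then wt p q ys else wt q p ys" and c="?c" and X="permutations_of_set T" and Y="permutations_of_set ?R"])
    also have "(\<Sum>ys\<in>permutations_of_set ?R. (if ?b then wt p q ys else wt q p ys))
       = (if ?b then W ?R p q else W ?R q p)"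
      unfolding W_def by (cases ?b) simp_all
    also have "(\<Sum>xs\<in>permutations_of_set T. wt p q xs) = W T p q" unfolding W_def ..
    finally show "(\<Sum>(xs, ys)\<in>permutations_of_set T \<times> permutations_of_set ?R. wt p q (xs @ m # ys))
       = W T p q * ?c * (if ?b then W ?R p q else W ?R q p)" .
  qed
  finally show ?thesis .
qed


lemma sum_pow_card:
  fixes F :: "nat \<Rightarrow> 'a::comm_ring_1"
  assumes "finite X"
  shows "(\<Sum>T\<in>Pow X. F (card T)) = (\<Sum>j\<le>card X. of_nat (card X choose j) * F j)"
proof -
  have "(\<Sum>T\<in>Pow X. F (card T)) = (\<Sum>j\<in>{..card X}. \<Sum>T\<in>{T \<in> Pow X. card T = j}. F (card T))"
    by (rule sum.group[symmetric]) (use assms in \<open>auto intro: card_mono\<close>)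
  also have "\<dots> = (\<Sum>j\<le>card X. of_nat (card X choose j) * F j)"
  proof (rule sum.cong[OF refl])
    fix j
    have "{T \<in> Pow X. card T = j} = {T. T \<subseteq> X \<and> card T = j}" by auto
    then have c: "card {T \<in> Pow X. card T = j} = card X choose j" using n_subsets[OF assms] by simp
    have "(\<Sum>T\<in>{T \<in> Pow X. card T = j}. F (card T)) = (\<Sum>T\<in>{T \<in> Pow X. card T = j}. F j)"
      by (rule sum.cong) auto
    also have "\<dots> = of_nat (card X choose j) * F j" using c by simp
    finally show "(\<Sum>T\<in>{T \<in> Pow X. card T = j}. F (card T)) = of_nat (card X choose j) * F j" .
  qed
  finally show ?thesis .
qed

definition G :: "nat \<Rightarrow> 'a::comm_ring_1 \<Rightarrow> 'a \<Rightarrow> nat \<Rightarrow> 'a" where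
  "G N p q j = of_nat ((N - 1) choose j) * A j p q * (if j = N - 1 then 1 else w p q (Suc j))
      * (if even (Suc j) then A (N - 1 - j) p q else A (N - 1 - j) q p)"

lemma W_main:
  fixes p q :: "'a::comm_ring_1"
  assumes IH: "\<And>T (p'::'a) q'. finite T \<Longrightarrow> card T < N \<Longrightarrow> W T p' q' = A (card T) p' q'"
    and S: "finite S" "card S = N" "N \<ge> 1"
  shows "W S p q = (\<Sum>j<N. G N p q j)"
proof -
    have ne: "S \<noteq> {}" using S by auto
    define m where "m = Max S"
    have mS: "m \<in> S" unfolding m_def using S ne by simp
    let ?X = "S - {m}"
    have cX: "card ?X = N - 1" using S mS by simp
    have finX: "finite ?X" using S by simp
    have "W S p q = (\<Sum>T\<in>Pow ?X. W T p q *
      (if card T = card S - 1 then 1 else w p q (Suc (card T))) *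
      (if even (Suc (card T)) then W (?X - T) p q else W (?X - T) q p))"
      unfolding m_def by (rule W_decomp[OF S(1) ne])
    also have "\<dots> = (\<Sum>T\<in>Pow ?X. A (card T) p q *
      (if card T = N - 1 then 1 else w p q (Suc (card T))) *
      (if even (Suc (card T)) then A (N - 1 - card T) p q else A (N - 1 - card T) q p))"
    proof (rule sum.cong[OF refl])
      fix T assume T: "T \<in> Pow ?X"
      have fT: "finite T" using T finX by (auto intro: finite_subset)
      have cT: "card T \<le> N - 1" using T finX cX by (metis PowD card_mono)
      have cR: "card (?X - T) = N - 1 - card T" using T fT cX by (simp add: card_Diff_subset)
      have h1: "W T p q = A (card T) p q" using IH[of T] fT cT S(3) by auto
      have h2: "W (?X - T) p' q' = A (N - 1 - card T) p' q'" for p' q' :: 'a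
        using IH[of "?X - T"] finX cR S(3) by auto
      show "W T p q * (if card T = card S - 1 then 1 else w p q (Suc (card T))) *
        (if even (Suc (card T)) then W (?X - T) p q else W (?X - T) q p) =
        A (card T) p q * (if card T = N - 1 then 1 else w p q (Suc (card T))) *
        (if even (Suc (card T)) then A (N - 1 - card T) p q else A (N - 1 - card T) q p)"
        using h1 h2 S(2) by simp
    qed
    also have "\<dots> = (\<Sum>j\<le>card ?X. of_nat (card ?X choose j) * (A j p q *
      (if j = N - 1 then 1 else w p q (Suc j)) *
      (if even (Suc j) then A (N - 1 - j) p q else A (N - 1 - j) q p)))"
      by (rule sum_pow_card[OF finX])
    also have "\<dots> = (\<Sum>j<N. G N p q j)"
    proof -
      have "{..card ?X} = {..<N}" using cX S(3) by auto
      then show ?thesis unfolding G_def cX by (simp add: mult.assoc)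
    qed
    finally show ?thesis .
qed

lemma W_card_aux:
  "\<forall>(S::nat set) (p::'a::comm_ring_1) q. finite S \<and> card S = N \<longrightarrow> W S p q = A N p q"
proof (induction N rule: less_induct)
  case (less N)
  show ?case
  proof (intro allI impI)
    fix S :: "nat set" and p q :: 'a
    assume S: "finite S \<and> card S = N"
    show "W S p q = A N p q"
    proof (cases "N = 0")
      case True
      then have "S = {}" using S by auto
      then show ?thesis using True by (simp add: W_def A_W wt_def descents_def)
    next
      case False
      have IH: "\<And>T (p'::'a) q'. finite T \<Longrightarrow> card T < N \<Longrightarrow> W T p' q' = A (card T) p' q'"
        using less.IH by blast
      have "W S p q = (\<Sum>j<N. G N p q j)" using W_main[OF IH] S False by simp
      also have "\<dots> = W {1..N} p q" using W_main[OF IH, where S="{1..N}"] False by simp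
      finally show ?thesis by (simp add: A_W)
    qed
  qed
qed

lemma W_card: "finite S \<Longrightarrow> W S p q = A (card S) p q"
  using W_card_aux by blast

lemma A_rec: "N \<ge> 1 \<Longrightarrow> A N p q = (\<Sum>j<N. G N p q j)"
  unfolding A_W by (rule W_main[OF W_card]) auto


lemma descents_rev_map:
  assumes mono: "\<And>a b. a \<in> set xs \<Longrightarrow> b \<in> set xs \<Longrightarrow> f a > f b \<longleftrightarrow> a < b"
  shows "descents (rev (map f xs)) = (\<lambda>j. length xs - j) ` descents xs"
proof (rule set_eqI)
  fix i
  define L where "L = length xs"
  define ys where "ys = rev (map f xs)"
  have lys: "length ys = L" unfolding ys_def L_def by simp
  have key: "ys ! (i - 1) > ys ! i \<longleftrightarrow> xs ! (L - i - 1) > xs ! (L - i)" if i: "1 \<le> i" "i < L" for i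
  proof -
    have e1: "ys ! (i - 1) = f (xs ! (L - i))" using i unfolding ys_def L_def by (simp add: rev_nth)
    have e2: "ys ! i = f (xs ! (L - Suc i))" using i unfolding ys_def L_def by (simp add: rev_nth)
    have s1: "xs ! (L - i) \<in> set xs" using i unfolding L_def by (intro nth_mem) linarith
    have s2: "xs ! (L - Suc i) \<in> set xs" using i unfolding L_def by (intro nth_mem) linarith
    have m1: "f (xs ! (L - i)) > f (xs ! (L - Suc i)) \<longleftrightarrow> xs ! (L - i) < xs ! (L - Suc i)"
      by (rule mono[OF s1 s2])
    have d: "L - i - 1 = L - Suc i" by simp
    show ?thesis unfolding e1 e2 m1 d ..
  qed
  have dys: "i \<in> descents ys \<longleftrightarrow> 1 \<le> i \<and> i < L \<and> ys ! (i - 1) > ys ! i"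
    unfolding descents_def lys by simp
  have dxs: "j \<in> descents xs \<longleftrightarrow> 1 \<le> j \<and> j < L \<and> xs ! (j - 1) > xs ! j" for j
    unfolding descents_def L_def by simp
  have "i \<in> descents ys \<longleftrightarrow> i \<in> (\<lambda>j. L - j) ` descents xs"
  proof
    assume "i \<in> descents ys"
    then have i: "1 \<le> i" "i < L" "ys ! (i - 1) > ys ! i" using dys by auto
    have "L - i \<in> descents xs" unfolding dxs using i key[OF i(1,2)]
      by (simp add: diff_diff_left)
    moreover have "i = L - (L - i)" using i by simp
    ultimately show "i \<in> (\<lambda>j. L - j) ` descents xs" by blast
  next
    assume "i \<in> (\<lambda>j. L - j) ` descents xs"
    then obtain j where j: "j \<in> descents xs" "i = L - j" by blast
    then have jj: "1 \<le> j" "j < L" "xs ! (j - 1) > xs ! j" using dxs by auto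
    have i: "1 \<le> i" "i < L" "L - i = j" using jj j(2) by auto
    have "ys ! (i - 1) > ys ! i" using key[OF i(1,2)] jj i(3) by simp
    then show "i \<in> descents ys" using dys i by simp
  qed
  then show "i \<in> descents (rev (map f xs)) \<longleftrightarrow> i \<in> (\<lambda>j. length xs - j) ` descents xs"
    unfolding ys_def L_def .
qed

lemma wt_rev_map:
  assumes mono: "\<And>a b. a \<in> set xs \<Longrightarrow> b \<in> set xs \<Longrightarrow> f a > f b \<longleftrightarrow> a < b"
    and odd: "odd (length xs)"
  shows "wt p q (rev (map f xs)) = wt q p xs"
proof -
  let ?L = "length xs"
  have inj: "inj_on (\<lambda>j. ?L - j) (descents xs)"
  proof (rule inj_onI)
    fix x y assume a: "x \<in> descents xs" "y \<in> descents xs" "?L - x = ?L - y"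
    have "x < ?L" "y < ?L" using a(1,2) descents_sub[of xs] by auto
    then show "x = y" using a(3) by arith
  qed
  have d: "descents (rev (map f xs)) = (\<lambda>j. ?L - j) ` descents xs" by (rule descents_rev_map[OF mono])
  have "wt p q (rev (map f xs)) = prod (w p q) ((\<lambda>j. ?L - j) ` descents xs)"
    unfolding wt_def d ..
  also have "\<dots> = (\<Prod>j\<in>descents xs. w p q (?L - j))"
    using prod.reindex[OF inj, of "w p q"] by (simp add: comp_def)
  also have "\<dots> = wt q p xs"
    unfolding wt_def
  proof (rule prod.cong[OF refl])
    fix j assume "j \<in> descents xs"
    then have "j < ?L" using descents_sub[of xs] by auto
    then have "odd (?L - j) \<longleftrightarrow> even j" using odd by presburger
    then show "w p q (?L - j) = w q p j" unfolding w_def by simp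
  qed
  finally show ?thesis .
qed

lemma A_sym:
  assumes "odd m"
  shows "A m p q = A m q p"
proof -
  let ?f = "\<lambda>x::nat. Suc m - x"
  let ?rc = "\<lambda>xs. rev (map ?f xs)"
  let ?P = "permutations_of_set {1..m}"
  have mono: "\<And>a b. a \<in> set xs \<Longrightarrow> b \<in> set xs \<Longrightarrow> ?f a > ?f b \<longleftrightarrow> a < b" if "xs \<in> ?P" for xs
    using that by (auto simp: permutations_of_set_def)
  have len: "length xs = m" if "xs \<in> ?P" for xs
    using length_finite_permutations_of_set[OF that] by simp
  have inv: "?rc (?rc xs) = xs" if "xs \<in> ?P" for xs
  proof -
    have "?rc (?rc xs) = map (?f \<circ> ?f) xs" by (simp add: rev_map)
    also have "\<dots> = xs" by (rule map_idI) (use that in \<open>auto simp: permutations_of_set_def\<close>)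
    finally show ?thesis .
  qed
  have img: "?f ` {1..m} = {1..m}"
  proof
    show "?f ` {1..m} \<subseteq> {1..m}" by auto
    show "{1..m} \<subseteq> ?f ` {1..m}"
    proof
      fix y assume "y \<in> {1..m}"
      then have "y = ?f (?f y)" "?f y \<in> {1..m}" by auto
      then show "y \<in> ?f ` {1..m}" by blast
    qed
  qed
  have injf: "inj_on ?f {1..m}" by (auto simp: inj_on_def)
  have clos: "?rc xs \<in> ?P" if "xs \<in> ?P" for xs
  proof -
    have s: "set xs = {1..m}" "distinct xs" using that by (auto simp: permutations_of_set_def)
    have "set (?rc xs) = {1..m}" using s img by simp
    moreover have "distinct (?rc xs)" using s injf by (simp add: distinct_map)
    ultimately show ?thesis by (simp add: permutations_of_set_def)
  qed
  have "A m p q = (\<Sum>xs\<in>?P. wt p q xs)" unfolding A_def wt_eq ..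
  also have "\<dots> = (\<Sum>xs\<in>?P. wt q p xs)"
  proof (rule sum.reindex_bij_witness[where i="?rc" and j="?rc"])
    fix a assume a: "a \<in> ?P"
    show "?rc (?rc a) = a" by (rule inv[OF a])
    show "?rc a \<in> ?P" by (rule clos[OF a])
    show "wt q p (?rc a) = wt p q a"
      by (rule wt_rev_map[OF mono[OF a]]) (use len[OF a] assms in auto)
  next
    fix b assume b: "b \<in> ?P"
    show "?rc (?rc b) = b" by (rule inv[OF b])
    show "?rc b \<in> ?P" by (rule clos[OF b])
  qed
  also have "\<dots> = A m q p" unfolding A_def wt_eq ..
  finally show ?thesis .
qed

lemma A0: "A 0 p q = 1"
  by (simp add: A_def odes_def edes_def descents_def)


lemma sum_even_odd:
  fixes g :: "nat \<Rightarrow> 'a::comm_monoid_add" and n :: nat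
  shows "(\<Sum>j<2*n. g j) = (\<Sum>i<n. g (2*i)) + (\<Sum>i<n. g (2*i+1))"
  by (induction n) (simp_all add: algebra_simps)

lemma sum_shift1: "(\<Sum>i=1..n. f i) = (\<Sum>i<n. f (Suc i))"
  by (induction n) (simp_all add: atLeastAtMostSuc_conv add.commute)

lemma G_e1:
  fixes p q :: "'a::comm_ring_1"
  assumes "i \<le> k"
  shows "G (2*k+2) p q (2*i) = p * (of_nat ((2*k+1) choose (2*i)) * A (2*i) p q * A (2*k+1-2*i) p q)"
proof -
  have o: "odd (2*k+1-2*i)" using assms by presburger
  have ne: "2*i \<noteq> 2*k+1" by presburger
  have "G (2*k+2) p q (2*i) = of_nat ((2*k+1) choose (2*i)) * A (2*i) p q * p * A (2*k+1-2*i) q p"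
    unfolding G_def w_def using ne by simp
  then show ?thesis using A_sym[OF o, of p q] by (simp add: mult_ac)
qed

lemma G_o1:
  fixes p q :: "'a::comm_ring_1"
  assumes "i < k"
  shows "G (2*k+2) p q (2*i+1) = q * (of_nat ((2*k+1) choose (2*i+1)) * A (2*i+1) p q * A (2*k-2*i) p q)"
proof -
  have "G (2*k+2) p q (2*i+1) = of_nat ((2*k+1) choose (2*i+1)) * A (2*i+1) p q * q * A (2*k+1-(2*i+1)) p q"
    unfolding G_def w_def using assms by simp
  moreover have "2*k+1-(2*i+1) = 2*k-2*i" by simp
  ultimately show ?thesis by (simp add: mult_ac)
qed

lemma G_o1_last:
  fixes p q :: "'a::comm_ring_1"
  shows "G (2*k+2) p q (2*k+1) = A (2*k+1) p q"
  unfolding G_def by (simp add: A0)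

lemma G_e2:
  fixes p q :: "'a::comm_ring_1"
  assumes "i \<le> k"
  shows "G (2*k+3) p q (2*i) = p * (of_nat ((2*k+2) choose (2*i)) * A (2*i) p q * A (2*k+2-2*i) q p)"
proof -
  have "G (2*k+3) p q (2*i) = of_nat ((2*k+2) choose (2*i)) * A (2*i) p q * p * A (2*k+2-2*i) q p"
    unfolding G_def w_def using assms by simp
  then show ?thesis by (simp add: mult_ac)
qed

lemma G_o2:
  fixes p q :: "'a::comm_ring_1"
  assumes "i \<le> k"
  shows "G (2*k+3) p q (2*i+1) = q * (of_nat ((2*k+2) choose (2*i+1)) * A (2*i+1) p q * A (2*k+1-2*i) p q)"
proof -
  have "G (2*k+3) p q (2*i+1) = of_nat ((2*k+2) choose (2*i+1)) * A (2*i+1) p q * q * A (2*k+2-(2*i+1)) p q"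
    unfolding G_def w_def using assms by simp
  moreover have "2*k+2-(2*i+1) = 2*k+1-2*i" using assms by simp
  ultimately show ?thesis by (simp add: mult_ac)
qed

lemma G_e2_last:
  fixes p q :: "'a::comm_ring_1"
  shows "G (2*k+3) p q (2*k+2) = A (2*k+2) p q"
  unfolding G_def by (simp add: A0)

lemma part1:
  fixes p q :: "'a::comm_ring_1"
  shows "A (2*k+2) p q = (1 + p) * A (2*k+1) p q + (p + q) *
     (\<Sum>i<k. of_nat ((2*k+1) choose (2*i+1)) * A (2*i+1) p q * A (2*k-2*i) p q)"
proof -
  let ?T = "\<lambda>i. of_nat ((2*k+1) choose (2*i+1)) * A (2*i+1) p q * A (2*k-2*i) p q"
  let ?E = "\<lambda>i. of_nat ((2*k+1) choose (2*i)) * A (2*i) p q * A (2*k+1-2*i) p q"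
  have "A (2*k+2) p q = (\<Sum>j<2*(k+1). G (2*k+2) p q j)"
    using A_rec[of "2*k+2" p q] by simp
  also have "\<dots> = (\<Sum>i<Suc k. G (2*k+2) p q (2*i)) + (\<Sum>i<Suc k. G (2*k+2) p q (2*i+1))"
    by (simp only: sum_even_odd Suc_eq_plus1)
  also have "(\<Sum>i<Suc k. G (2*k+2) p q (2*i+1)) = q * sum ?T {..<k} + A (2*k+1) p q"
  proof -
    have "(\<Sum>i<Suc k. G (2*k+2) p q (2*i+1)) = (\<Sum>i<k. G (2*k+2) p q (2*i+1)) + G (2*k+2) p q (2*k+1)"
      by (simp only: sum.lessThan_Suc)
    also have "(\<Sum>i<k. G (2*k+2) p q (2*i+1)) = (\<Sum>i<k. q * ?T i)"
      by (rule sum.cong[OF refl], rule G_o1) simp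
    also have "\<dots> = q * sum ?T {..<k}" by (simp only: sum_distrib_left)
    also have "G (2*k+2) p q (2*k+1) = A (2*k+1) p q" by (rule G_o1_last)
    finally show ?thesis .
  qed
  also have "(\<Sum>i<Suc k. G (2*k+2) p q (2*i)) = p * (A (2*k+1) p q + sum ?T {..<k})"
  proof -
    have "(\<Sum>i<Suc k. G (2*k+2) p q (2*i)) = (\<Sum>i<Suc k. p * ?E i)"
      by (rule sum.cong[OF refl], rule G_e1) simp
    also have "\<dots> = p * sum ?E {..<Suc k}" by (simp only: sum_distrib_left)
    also have "sum ?E {..<Suc k} = ?E 0 + (\<Sum>i<k. ?E (Suc i))" by (rule sum.lessThan_Suc_shift)
    also have "?E 0 = A (2*k+1) p q" by (simp add: A0)
    also have "(\<Sum>i<k. ?E (Suc i)) = (\<Sum>i<k. ?E (Suc (k - Suc i)))"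
      by (rule sum.nat_diff_reindex[symmetric])
    also have "\<dots> = sum ?T {..<k}"
    proof (rule sum.cong[OF refl])
      fix i assume "i \<in> {..<k}"
      then have i: "i < k" by simp
      have a1: "2 * Suc (k - Suc i) = 2*k - 2*i" using i by simp
      have a2: "2*k+1 - (2*k - 2*i) = 2*i+1" using i by simp
      have a3: "(2*k+1) choose (2*k - 2*i) = (2*k+1) choose (2*i+1)"
        using binomial_symmetric[of "2*k-2*i" "2*k+1"] a2 by simp
      show "?E (Suc (k - Suc i)) = ?T i" unfolding a1 a2 a3 by (simp add: mult_ac)
    qed
    finally show ?thesis .
  qed
  finally show ?thesis by (simp only: distrib_left distrib_right mult_1_left ac_simps)
qed

lemma part2:
  fixes p q :: "'a::comm_ring_1"
  shows "A (2*k+3) p q = A (2*k+2) p q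
     + p * (\<Sum>i<Suc k. of_nat ((2*k+2) choose (2*i)) * A (2*i) p q * A (2*k+2-2*i) q p)
     + q * (\<Sum>i<Suc k. of_nat ((2*k+2) choose (2*i+1)) * A (2*i+1) p q * A (2*k+1-2*i) p q)"
proof -
  have "A (2*k+3) p q = (\<Sum>j<Suc (2*(k+1)). G (2*k+3) p q j)"
    using A_rec[of "2*k+3" p q] by (simp add: numeral_eq_Suc)
  also have "\<dots> = (\<Sum>j<2*(k+1). G (2*k+3) p q j) + G (2*k+3) p q (2*(k+1))"
    by (simp only: sum.lessThan_Suc)
  also have "(\<Sum>j<2*(k+1). G (2*k+3) p q j) = (\<Sum>i<Suc k. G (2*k+3) p q (2*i)) + (\<Sum>i<Suc k. G (2*k+3) p q (2*i+1))"
    by (simp only: sum_even_odd Suc_eq_plus1)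
  also have "(\<Sum>i<Suc k. G (2*k+3) p q (2*i)) = p * (\<Sum>i<Suc k. of_nat ((2*k+2) choose (2*i)) * A (2*i) p q * A (2*k+2-2*i) q p)"
    unfolding sum_distrib_left by (rule sum.cong[OF refl], rule G_e2) simp
  also have "(\<Sum>i<Suc k. G (2*k+3) p q (2*i+1)) = q * (\<Sum>i<Suc k. of_nat ((2*k+2) choose (2*i+1)) * A (2*i+1) p q * A (2*k+1-2*i) p q)"
    unfolding sum_distrib_left by (rule sum.cong[OF refl], rule G_o2) simp
  also have "G (2*k+3) p q (2*(k+1)) = A (2*k+2) p q"
    using G_e2_last[of k p q] by (simp add: algebra_simps)
  finally show ?thesis by (simp only: ac_simps)
qed


theorem lemma2p1:
  fixes p q :: "'a::comm_ring_1" and n :: nat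
  assumes "n \<ge> 1"
  shows "A (2*n) p q = (1 + p) * A (2*n - 1) p q
           + (p + q) * (\<Sum>i=1..n-1. of_nat ((2*n - 1) choose (2*i - 1))
                                    * A (2*i - 1) p q * A (2*n - 2*i) p q)
       \<and> A (2*n + 1) p q = A (2*n) p q
           + p * (\<Sum>i=0..n-1. of_nat ((2*n) choose (2*i)) * A (2*i) p q * A (2*n - 2*i) q p)
           + q * (\<Sum>i=1..n. of_nat ((2*n) choose (2*i - 1))
                              * A (2*i - 1) p q * A (2*n - 2*i + 1) p q)"
proof -
  obtain k where n: "n = Suc k" using assms by (cases n) auto
  have s1: "(\<Sum>i=1..n-1. of_nat ((2*n - 1) choose (2*i - 1)) * A (2*i - 1) p q * A (2*n - 2*i) p q)
      = (\<Sum>i<k. of_nat ((2*k+1) choose (2*i+1)) * A (2*i+1) p q * A (2*k-2*i) p q)"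
    unfolding n diff_Suc_1 sum_shift1 by (rule sum.cong[OF refl]) simp
  have s2: "(\<Sum>i=0..n-1. of_nat ((2*n) choose (2*i)) * A (2*i) p q * A (2*n - 2*i) q p)
      = (\<Sum>i<Suc k. of_nat ((2*k+2) choose (2*i)) * A (2*i) p q * A (2*k+2-2*i) q p)"
    unfolding n diff_Suc_1 atLeast0AtMost lessThan_Suc_atMost by (rule sum.cong[OF refl]) simp
  have s3: "(\<Sum>i=1..n. of_nat ((2*n) choose (2*i - 1)) * A (2*i - 1) p q * A (2*n - 2*i + 1) p q)
      = (\<Sum>i<Suc k. of_nat ((2*k+2) choose (2*i+1)) * A (2*i+1) p q * A (2*k+1-2*i) p q)"
    unfolding n sum_shift1 by (rule sum.cong[OF refl]) (auto simp: Suc_diff_le)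
  have e: "2*n = 2*k+2" "2*n - 1 = 2*k+1" "2*n+1 = 2*k+3" using n by simp_all
  have e': "2*k+2-1 = 2*k+1" "2*k+2+1 = 2*k+3" by simp_all
  show ?thesis unfolding s1 s2 s3 unfolding e(1) unfolding e' by (rule conjI[OF part1 part2])
qed

end
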